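(* Let $n\geq2$, $H=\{x\in\mathbb{R}^{n+1}:\sum_i x_i=0\}$, $p_H$ the orthogonal projection onto $H$, $V_0=\{0,1\}^{n+1}\setminus\{(0,\dots,0),(1,\dots,1)\}$, $V_{\mathcal{P}}=p_H(V_0)$ (the vertex set of the Voronoi region of $A_n=\mathbb{Z}^{n+1}\cap H$), and let $\tilde G$ be the Cayley graph on $\frac12p_H(\mathbb{Z}^{n+1})$ with generating set $\frac12V_{\mathcal{P}}$. Then the cliques of $\tilde G$ containing $0$ are exactly the sets of the form $\{0,\frac{p_H(u_1)}{2},\dots,\frac{p_H(u_s)}{2}\}$ with $u_1,\dots,u_s$ distinct elements of $V_0$ whose supports $I_i=\{j:(u_i)_j=1\}$ satisfy $I_1\subset I_2\subset\cdots\subset I_s$. In particular, a clique of $\tilde G$ contains at most $n+1$ vertices.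
   Context: In the Cayley graph, $x,y$ are adjacent iff $x-y\in\frac12V_{\mathcal{P}}$. A clique is a set of vertices any two distinct elements of which are adjacent. *)

theory Defs
  imports "HOL-Analysis.Analysis"
begin

text \<open>Ambient space R^{n+1} is rendered as real^'n with CARD('n) = n+1.\<close>

definition hyperH :: "(real^'n) set" where
  "hyperH = {x. (\<Sum>i\<in>UNIV. x $ i) = 0}"

definition pH :: "real^'n \<Rightarrow> real^'n" where
  "pH x = x - (\<chi> i. (\<Sum>j\<in>UNIV. x $ j) / real CARD('n))"

definition V0 :: "(real^'n) set" where
  "V0 = {u. \<forall>i. u $ i = 0 \<or> u $ i = 1} - {0, (\<chi> i. 1)}"

definition VP :: "(real^'n) set" where
  "VP = pH ` V0"

definition supp01 :: "real^'n \<Rightarrow> 'n set" where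
  "supp01 u = {j. u $ j = 1}"

definition cayley_vertices :: "(real^'n) set" where
  "cayley_vertices = (\<lambda>z. (1/2) *\<^sub>R pH z) ` {z. \<forall>i. z $ i \<in> \<int>}"

definition cayley_adj :: "real^'n \<Rightarrow> real^'n \<Rightarrow> bool" where
  "cayley_adj x y \<longleftrightarrow> x - y \<in> (\<lambda>v. (1/2) *\<^sub>R v) ` VP"

definition cayley_clique :: "(real^'n) set \<Rightarrow> bool" where
  "cayley_clique C \<longleftrightarrow> C \<subseteq> cayley_vertices \<and>
     (\<forall>x\<in>C. \<forall>y\<in>C. x \<noteq> y \<longrightarrow> cayley_adj x y)"

end

theory Submission
  imports Defs
begin

definition one :: "real^'n" where "one = (\<chi> i. 1)"
definition hv :: "real^'n \<Rightarrow> real^'n" where "hv u = (1/2) *\<^sub>R pH u"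

lemma pH_nth: "pH x $ i = x $ i - (\<Sum>j\<in>UNIV. x $ j) / real CARD('n)"
  for x :: "real^'n" by (simp add: pH_def)

lemma pH_diff: "pH (x - y) = pH x - pH y"
  by (simp add: vec_eq_iff pH_nth sum_subtractf diff_divide_distrib)

lemma pH_eq_iff: "pH x = pH y \<longleftrightarrow> (\<exists>c. x - y = (\<chi> i. c))"
  for x y :: "real^'n"
proof
  assume h: "pH x = pH y"
  show "\<exists>c. x - y = (\<chi> i. c)"
  proof (intro exI)
    show "x - y = (\<chi> i. (\<Sum>j\<in>UNIV. x $ j) / real CARD('n) - (\<Sum>j\<in>UNIV. y $ j) / real CARD('n))"
    proof (subst vec_eq_iff, intro allI)
      fix i
      have "pH x $ i = pH y $ i" using h by simp
      thus "(x - y) $ i = (\<chi> i. (\<Sum>j\<in>UNIV. x $ j) / real CARD('n) - (\<Sum>j\<in>UNIV. y $ j) / real CARD('n)) $ i"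
        by (simp add: pH_nth)
    qed
  qed
next
  assume "\<exists>c. x - y = (\<chi> i. c)"
  then obtain c where c: "x - y = (\<chi> i. c)" by blast
  hence xi: "\<And>i. x $ i = y $ i + c" by (simp add: vec_eq_iff algebra_simps)
  have N: "real CARD('n) > 0" by simp
  have "(\<Sum>j\<in>UNIV. x $ j) = (\<Sum>j\<in>UNIV. y $ j) + real CARD('n) * c"
    by (simp add: xi sum.distrib)
  hence "(\<Sum>j\<in>UNIV. x $ j) / real CARD('n) = (\<Sum>j\<in>UNIV. y $ j) / real CARD('n) + c"
    using N by (simp add: field_simps)
  thus "pH x = pH y" by (simp add: vec_eq_iff pH_nth xi)
qed

lemma hv_diff: "hv (x - y) = hv x - hv y"
  by (simp add: hv_def pH_diff scaleR_diff_right)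

lemma hv0: "hv 0 = 0"
  by (simp add: hv_def pH_def vec_eq_iff)

lemma V0_iff: "u \<in> V0 \<longleftrightarrow> (\<forall>i. u $ i = 0 \<or> u $ i = 1) \<and> (\<exists>i. u $ i = 1) \<and> (\<exists>i. u $ i = 0)"
  for u :: "real^'n"
  apply (auto simp: V0_def vec_eq_iff) by (metis zero_neq_one)+

lemma V0_compl: "w \<in> V0 \<Longrightarrow> one - w \<in> V0"
  unfolding V0_iff one_def by force

lemma key:
  fixes u v w :: "real^'n"
  assumes "u \<in> V0" "v \<in> V0" "w \<in> V0" "u - v - w = (\<chi> i. c)"
  shows "supp01 v \<subset> supp01 u \<or> supp01 u \<subset> supp01 v"
proof -
  have e: "\<And>k. u $ k - v $ k - w $ k = c" using assms(4) by (simp add: vec_eq_iff)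
  have u: "\<And>k. u $ k = 0 \<or> u $ k = 1" and v: "\<And>k. v $ k = 0 \<or> v $ k = 1"
    and w: "\<And>k. w $ k = 0 \<or> w $ k = 1" using assms(1-3) by (auto simp: V0_iff)
  obtain i j where wi: "w $ i = 0" and wj: "w $ j = 1" using assms(3) by (auto simp: V0_iff)
  have "c = 0 \<or> c = -1" using e[of i] e[of j] wi wj u[of i] v[of i] u[of j] v[of j] by auto
  thus ?thesis
  proof
    assume c0: "c = 0"
    have "supp01 v \<subseteq> supp01 u"
    proof
      fix k assume "k \<in> supp01 v" thus "k \<in> supp01 u"
        using e[of k] c0 u[of k] w[of k] by (auto simp: supp01_def)
    qed
    moreover have "j \<in> supp01 u - supp01 v" unfolding supp01_def
      using e[of j] c0 wj u[of j] v[of j] by auto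
    ultimately show ?thesis by blast
  next
    assume c0: "c = -1"
    have "supp01 u \<subseteq> supp01 v"
    proof
      fix k assume "k \<in> supp01 u" thus "k \<in> supp01 v"
        using e[of k] c0 v[of k] w[of k] by (auto simp: supp01_def)
    qed
    moreover have "i \<in> supp01 v - supp01 u" unfolding supp01_def
      using e[of i] c0 wi u[of i] v[of i] by auto
    ultimately show ?thesis by blast
  qed
qed

lemma diff_V0:
  fixes u v :: "real^'n"
  assumes "u \<in> V0" "v \<in> V0" "supp01 v \<subset> supp01 u"
  shows "u - v \<in> V0"
proof -
  have u: "\<And>k. u $ k = 0 \<or> u $ k = 1" and v: "\<And>k. v $ k = 0 \<or> v $ k = 1"
    using assms(1-2) by (auto simp: V0_iff)
  have sub: "\<And>k. v $ k = 1 \<Longrightarrow> u $ k = 1" using assms(3) by (auto simp: supp01_def)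
  obtain j where j1: "u $ j = 1" and j2: "v $ j \<noteq> 1" using assms(3) by (auto simp: supp01_def)
  obtain i where i1: "u $ i = 0" using assms(1) by (auto simp: V0_iff)
  show ?thesis unfolding V0_iff
  proof (intro conjI)
    show "\<forall>k. (u - v) $ k = 0 \<or> (u - v) $ k = 1"
    proof
      fix k show "(u - v) $ k = 0 \<or> (u - v) $ k = 1" using u[of k] v[of k] sub[of k] by auto
    qed
    show "\<exists>k. (u - v) $ k = 1" using j1 j2 v[of j] by (intro exI[of _ j]) auto
    show "\<exists>k. (u - v) $ k = 0" using i1 v[of i] sub[of i] by (intro exI[of _ i]) auto
  qed
qed

lemma hv_eq_iff: "hv x = hv y \<longleftrightarrow> pH x = pH y"
  by (simp add: hv_def)

lemma adj_lt:
  fixes u v :: "real^'n"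
  assumes "u \<in> V0" "v \<in> V0" "supp01 v \<subset> supp01 u"
  shows "cayley_adj (hv u) (hv v) \<and> cayley_adj (hv v) (hv u)"
proof -
  have w: "u - v \<in> V0" by (rule diff_V0[OF assms])
  have "hv u - hv v = (1/2) *\<^sub>R pH (u - v)" by (simp add: hv_def pH_diff scaleR_diff_right)
  hence 1: "cayley_adj (hv u) (hv v)" using w unfolding cayley_adj_def VP_def by blast
  have "pH (v - u) = pH (one - (u - v))"
    unfolding pH_eq_iff by (rule exI[of _ "-1"]) (simp add: vec_eq_iff one_def)
  hence "hv v - hv u = (1/2) *\<^sub>R pH (one - (u - v))" by (simp add: hv_def pH_diff scaleR_diff_right)
  hence 2: "cayley_adj (hv v) (hv u)" using V0_compl[OF w] unfolding cayley_adj_def VP_def by blast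
  from 1 2 show ?thesis ..
qed

lemma adj_0:
  fixes u :: "real^'n"
  assumes "u \<in> V0"
  shows "cayley_adj (hv u) 0 \<and> cayley_adj 0 (hv u)"
proof -
  have 1: "cayley_adj (hv u) 0" using assms unfolding cayley_adj_def VP_def hv_def by auto
  have e: "pH (0 - u) = pH (one - u)"
    unfolding pH_eq_iff by (rule exI[of _ "-1"]) (simp add: vec_eq_iff one_def)
  have "0 - hv u = hv (0 - u)" by (simp only: hv_diff hv0)
  also have "\<dots> = (1/2) *\<^sub>R pH (one - u)" by (simp only: hv_def e)
  finally have "0 - hv u = (1/2) *\<^sub>R pH (one - u)" .
  hence 2: "cayley_adj 0 (hv u)" using V0_compl[OF assms] unfolding cayley_adj_def VP_def by blast
  from 1 2 show ?thesis ..
qed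

lemma adj_char:
  fixes u v :: "real^'n"
  assumes "u \<in> V0" "v \<in> V0" "cayley_adj (hv u) (hv v)"
  shows "supp01 v \<subset> supp01 u \<or> supp01 u \<subset> supp01 v"
proof -
  obtain w where w: "w \<in> V0" "hv u - hv v = (1/2) *\<^sub>R pH w"
    using assms(3) unfolding cayley_adj_def VP_def by auto
  hence "(1/2) *\<^sub>R pH (u - v) = (1/2) *\<^sub>R pH w" by (simp add: hv_def pH_diff scaleR_diff_right)
  hence "pH (u - v) = pH w" by simp
  then obtain c where "u - v - w = (\<chi> i. c)" unfolding pH_eq_iff by blast
  thus ?thesis using key assms w by blast
qed

lemma hv_inj:
  fixes u v :: "real^'n"
  assumes "u \<in> V0" "v \<in> V0" "hv u = hv v"
  shows "u = v"
proof -
  obtain c where c: "u - v = (\<chi> i. c)" using assms(3) unfolding hv_eq_iff pH_eq_iff by blast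
  hence e: "\<And>k. u $ k - v $ k = c" by (simp add: vec_eq_iff)
  have u: "\<And>k. u $ k = 0 \<or> u $ k = 1" and v: "\<And>k. v $ k = 0 \<or> v $ k = 1"
    using assms(1-2) by (auto simp: V0_iff)
  obtain i where ui: "u $ i = 1" using assms(1) by (auto simp: V0_iff)
  obtain i' where ui': "u $ i' = 0" using assms(1) by (auto simp: V0_iff)
  have "c = 0" using e[of i] e[of i'] ui ui' v[of i] v[of i'] by auto
  thus ?thesis using e by (simp add: vec_eq_iff)
qed

lemma chain_list:
  fixes S :: "(real^'n) set"
  assumes "finite S"
  shows "(\<forall>u\<in>S. \<forall>v\<in>S. u \<noteq> v \<longrightarrow> supp01 u \<subset> supp01 v \<or> supp01 v \<subset> supp01 u) \<longrightarrow>
    (\<exists>us. distinct us \<and> set us = S \<and> sorted_wrt (\<lambda>u v. supp01 u \<subset> supp01 v) us)"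
  using assms
proof (induction S rule: finite_ranking_induct[where f="\<lambda>u. card (supp01 u)"])
  case empty
  show ?case by (intro impI exI[of _ "[]"]) simp
next
  case (insert x S)
  show ?case
  proof
    assume ch: "\<forall>u\<in>insert x S. \<forall>v\<in>insert x S. u \<noteq> v \<longrightarrow> supp01 u \<subset> supp01 v \<or> supp01 v \<subset> supp01 u"
    hence "\<forall>u\<in>S. \<forall>v\<in>S. u \<noteq> v \<longrightarrow> supp01 u \<subset> supp01 v \<or> supp01 v \<subset> supp01 u" by blast
    then obtain us where us: "distinct us" "set us = S" "sorted_wrt (\<lambda>u v. supp01 u \<subset> supp01 v) us"
      using insert.IH by blast
    show "\<exists>us. distinct us \<and> set us = insert x S \<and> sorted_wrt (\<lambda>u v. supp01 u \<subset> supp01 v) us"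
    proof (cases "x \<in> S")
      case True
      thus ?thesis using us by (intro exI[of _ us]) (auto simp: insert_absorb)
    next
      case False
      have lt: "\<forall>y\<in>S. supp01 y \<subset> supp01 x"
      proof
        fix y assume y: "y \<in> S"
        hence ne: "y \<noteq> x" using False by blast
        have le: "card (supp01 y) \<le> card (supp01 x)" using insert(2) y by blast
        have "supp01 y \<subset> supp01 x \<or> supp01 x \<subset> supp01 y" using ch y ne by blast
        moreover have "\<not> supp01 x \<subset> supp01 y"
        proof
          assume "supp01 x \<subset> supp01 y"
          hence "card (supp01 x) < card (supp01 y)" by (intro psubset_card_mono) auto
          thus False using le by simp
        qed
        ultimately show "supp01 y \<subset> supp01 x" by blast
      qed
      show ?thesis using us lt False
        by (intro exI[of _ "us @ [x]"]) (auto simp: sorted_wrt_append)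
    qed
  qed
qed

lemma sorted_wrt_pair: "sorted_wrt R xs \<Longrightarrow> u \<in> set xs \<Longrightarrow> v \<in> set xs \<Longrightarrow> u \<noteq> v \<Longrightarrow> R u v \<or> R v u"
  by (induction xs) auto

lemma supp_inj:
  fixes u v :: "real^'n"
  assumes "u \<in> V0" "v \<in> V0" "supp01 u = supp01 v"
  shows "u = v"
proof -
  have u: "\<And>k. u $ k = 0 \<or> u $ k = 1" and v: "\<And>k. v $ k = 0 \<or> v $ k = 1"
    using assms(1-2) by (auto simp: V0_iff)
  have e: "\<And>k. u $ k = 1 \<longleftrightarrow> v $ k = 1" using assms(3) by (auto simp: supp01_def set_eq_iff)
  have "\<And>k. u $ k = v $ k"
  proof -
    fix k show "u $ k = v $ k" using u[of k] v[of k] e[of k] by auto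
  qed
  thus ?thesis by (simp add: vec_eq_iff)
qed

lemma fin_V0:
  fixes S :: "(real^'n) set"
  assumes "S \<subseteq> V0"
  shows "finite S"
proof -
  have "inj_on supp01 S"
  proof (rule inj_onI)
    fix x y assume "x \<in> S" "y \<in> S" "supp01 x = supp01 y"
    thus "x = y" using assms supp_inj by blast
  qed
  moreover have "finite (supp01 ` S)" by simp
  ultimately show ?thesis using finite_imageD by blast
qed

lemma len_bound:
  fixes us :: "(real^'n) list"
  assumes "set us \<subseteq> V0" "sorted_wrt (\<lambda>u v. supp01 u \<subset> supp01 v) us"
  shows "length us \<le> CARD('n) - 1"
proof -
  let ?g = "\<lambda>u::real^'n. card (supp01 u)"
  have "sorted_wrt (\<lambda>u v. ?g u < ?g v) us"
    by (rule sorted_wrt_mono_rel[OF _ assms(2)]) (simp add: psubset_card_mono)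
  hence "sorted_wrt (<) (map ?g us)" by (simp add: sorted_wrt_map)
  hence d: "distinct (map ?g us)" by (simp add: strict_sorted_iff)
  have "set (map ?g us) \<subseteq> {1..CARD('n) - 1}"
  proof
    fix m assume "m \<in> set (map ?g us)"
    then obtain u where u: "u \<in> V0" "m = ?g u" using assms(1) by auto
    obtain i where "u $ i = 1" using u(1) by (auto simp: V0_iff)
    hence "supp01 u \<noteq> {}" by (auto simp: supp01_def)
    hence "m \<ge> 1" using u(2) by (simp add: Suc_leI card_gt_0_iff)
    obtain i' where "u $ i' = 0" using u(1) by (auto simp: V0_iff)
    hence "i' \<notin> supp01 u" by (simp add: supp01_def)
    hence "supp01 u \<subset> UNIV" by blast
    hence "m < CARD('n)" using u(2) by (simp add: psubset_card_mono)
    thus "m \<in> {1..CARD('n) - 1}" using \<open>m \<ge> 1\<close> by simp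
  qed
  hence "card (set (map ?g us)) \<le> CARD('n) - 1"
    using card_mono[of "{1..CARD('n) - 1}" "set (map ?g us)"] by simp
  moreover have "length us = card (set (map ?g us))" using distinct_card[OF d] by simp
  ultimately show ?thesis by linarith
qed

lemma V0_int: "u \<in> V0 \<Longrightarrow> \<forall>i. u $ i \<in> \<int>"
proof
  fix i assume "u \<in> V0"
  hence "u $ i = 0 \<or> u $ i = 1" by (simp add: V0_iff)
  thus "u $ i \<in> \<int>" by auto
qed

lemma hv_vertex: "\<forall>i. z $ i \<in> \<int> \<Longrightarrow> hv z \<in> cayley_vertices"
  unfolding cayley_vertices_def hv_def by blast

lemma pH0: "pH 0 = 0"
  by (simp add: pH_def vec_eq_iff)

lemma part1:
  fixes C :: "(real^'n) set"
  shows "(cayley_clique C \<and> 0 \<in> C) \<longleftrightarrow>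
            (\<exists>us. distinct us \<and> set us \<subseteq> V0 \<and>
                  sorted_wrt (\<lambda>u v. supp01 u \<subset> supp01 v) us \<and>
                  C = insert 0 (hv ` set us))"
proof
  assume h: "cayley_clique C \<and> 0 \<in> C"
  define S where "S = {u\<in>V0. hv u \<in> C}"
  have CS: "C = insert 0 (hv ` S)"
  proof
    show "C \<subseteq> insert 0 (hv ` S)"
    proof
      fix x assume x: "x \<in> C"
      show "x \<in> insert 0 (hv ` S)"
      proof (cases "x = 0")
        case False
        hence "cayley_adj x 0" using h x unfolding cayley_clique_def by blast
        then obtain w where "w \<in> V0" "x = hv w" unfolding cayley_adj_def VP_def hv_def by auto
        thus ?thesis using x S_def by auto
      qed simp
    qed
    show "insert 0 (hv ` S) \<subseteq> C" using h S_def by auto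
  qed
  have SV: "S \<subseteq> V0" using S_def by auto
  have ch: "\<forall>u\<in>S. \<forall>v\<in>S. u \<noteq> v \<longrightarrow> supp01 u \<subset> supp01 v \<or> supp01 v \<subset> supp01 u"
  proof (intro ballI impI)
    fix u v assume u: "u \<in> S" and v: "v \<in> S" and ne: "u \<noteq> v"
    have "hv u \<noteq> hv v" using hv_inj ne u v SV by blast
    hence "cayley_adj (hv u) (hv v)" using h u v S_def unfolding cayley_clique_def by blast
    thus "supp01 u \<subset> supp01 v \<or> supp01 v \<subset> supp01 u" using adj_char u v SV by blast
  qed
  obtain us where "distinct us" "set us = S" "sorted_wrt (\<lambda>u v. supp01 u \<subset> supp01 v) us"
    using chain_list[OF fin_V0[OF SV]] ch by blast
  thus "\<exists>us. distinct us \<and> set us \<subseteq> V0 \<and> sorted_wrt (\<lambda>u v. supp01 u \<subset> supp01 v) us \<and>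
          C = insert 0 (hv ` set us)" using SV CS by blast
next
  assume "\<exists>us. distinct us \<and> set us \<subseteq> V0 \<and> sorted_wrt (\<lambda>u v. supp01 u \<subset> supp01 v) us \<and>
          C = insert 0 (hv ` set us)"
  then obtain us where us: "set us \<subseteq> V0" "sorted_wrt (\<lambda>u v. supp01 u \<subset> supp01 v) us"
      "C = insert 0 (hv ` set us)" by blast
  have vert: "C \<subseteq> cayley_vertices"
  proof
    fix x assume "x \<in> C"
    then consider "x = 0" | u where "u \<in> set us" "x = hv u" using us(3) by blast
    thus "x \<in> cayley_vertices"
    proof cases
      case 1
      have h0: "hv (0::real^'n) = 0" by (simp add: hv_def pH0)
      have "hv (0::real^'n) \<in> cayley_vertices" by (rule hv_vertex) simp
      thus ?thesis using 1 h0 by simp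
    next
      case 2
      thus ?thesis using hv_vertex V0_int us(1) by blast
    qed
  qed
  have adj: "\<forall>x\<in>C. \<forall>y\<in>C. x \<noteq> y \<longrightarrow> cayley_adj x y"
  proof (intro ballI impI)
    fix x y assume x: "x \<in> C" and y: "y \<in> C" and ne: "x \<noteq> y"
    show "cayley_adj x y"
    proof (cases "x = 0")
      case True
      then obtain v where "v \<in> set us" "y = hv v" using y ne us(3) by auto
      thus ?thesis using True adj_0 us(1) by blast
    next
      case False
      then obtain u where u: "u \<in> set us" "x = hv u" using x us(3) by auto
      show ?thesis
      proof (cases "y = 0")
        case True
        thus ?thesis using u adj_0 us(1) by blast
      next
        case False
        then obtain v where v: "v \<in> set us" "y = hv v" using y us(3) by auto
        have "u \<noteq> v" using u v ne by blast
        hence "supp01 u \<subset> supp01 v \<or> supp01 v \<subset> supp01 u" using sorted_wrt_pair[OF us(2) u(1) v(1)] by blast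
        thus ?thesis using adj_lt u v us(1) by blast
      qed
    qed
  qed
  show "cayley_clique C \<and> 0 \<in> C" using vert adj us(3) unfolding cayley_clique_def by blast
qed

theorem lemma11:
  assumes "CARD('n::finite) \<ge> 3"
  shows "(\<forall>C :: (real^'n) set.
            (cayley_clique C \<and> 0 \<in> C) \<longleftrightarrow>
            (\<exists>us. distinct us \<and> set us \<subseteq> V0 \<and>
                  sorted_wrt (\<lambda>u v. supp01 u \<subset> supp01 v) us \<and>
                  C = insert 0 ((\<lambda>u. (1/2) *\<^sub>R pH u) ` set us)))
       \<and> (\<forall>C :: (real^'n) set. cayley_clique C \<longrightarrow> finite C \<and> card C \<le> CARD('n))"
proof -
  have hvl: "(\<lambda>u::real^'n. (1/2) *\<^sub>R pH u) = hv" by (simp add: hv_def fun_eq_iff)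
  have P2: "finite C \<and> card C \<le> CARD('n)" if cl: "cayley_clique C" for C :: "(real^'n) set"
  proof (cases "C = {}")
    case True thus ?thesis by simp
  next
    case False
    then obtain a where a: "a \<in> C" by blast
    define C' where "C' = (\<lambda>x. x - a) ` C"
    have vC: "C \<subseteq> cayley_vertices" using cl unfolding cayley_clique_def by blast
    have "C' \<subseteq> cayley_vertices"
    proof
      fix x' assume "x' \<in> C'"
      then obtain x where x: "x \<in> C" "x' = x - a" using C'_def by blast
      obtain z where z: "\<forall>i. z $ i \<in> \<int>" "x = hv z" using vC x(1) unfolding cayley_vertices_def hv_def by blast
      obtain z' where z': "\<forall>i. z' $ i \<in> \<int>" "a = hv z'" using vC a unfolding cayley_vertices_def hv_def by blast
      have "x' = hv (z - z')" using x z z' by (simp add: hv_diff)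
      moreover have "\<forall>i. (z - z') $ i \<in> \<int>" using z z' by simp
      ultimately show "x' \<in> cayley_vertices" using hv_vertex by blast
    qed
    moreover have "\<forall>x\<in>C'. \<forall>y\<in>C'. x \<noteq> y \<longrightarrow> cayley_adj x y"
    proof (intro ballI impI)
      fix x' y' assume "x' \<in> C'" "y' \<in> C'" "x' \<noteq> y'"
      then obtain x y where "x \<in> C" "y \<in> C" "x' = x - a" "y' = y - a" "x \<noteq> y" using C'_def by auto
      moreover have "cayley_adj x y" using cl calculation unfolding cayley_clique_def by blast
      ultimately show "cayley_adj x' y'" unfolding cayley_adj_def by simp
    qed
    moreover have "0 \<in> C'" using a C'_def by force
    ultimately have "cayley_clique C' \<and> 0 \<in> C'" unfolding cayley_clique_def by blast
    then obtain us where us: "set us \<subseteq> V0" "sorted_wrt (\<lambda>u v. supp01 u \<subset> supp01 v) us"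
      "C' = insert 0 (hv ` set us)" using part1 by blast
    have fC': "finite C'" using us(3) by simp
    have inj: "inj_on (\<lambda>x. x - a) C" by (simp add: inj_on_def)
    have fC: "finite C" using fC' inj C'_def finite_imageD by blast
    have cC: "card C' = card C" using inj C'_def card_image by blast
    have "card C' \<le> Suc (card (hv ` set us))" using us(3) by (simp add: card_insert_if)
    also have "\<dots> \<le> Suc (length us)" using card_image_le[of "set us" hv] card_length[of us] by simp
    also have "\<dots> \<le> CARD('n)" using len_bound[OF us(1,2)] assms by simp
    finally show ?thesis using fC cC by simp
  qed
  show ?thesis unfolding hvl using part1 P2 by blast
qed

end
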